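(* In the setting of the context, assume $\omega=0$ and let $(h_1,h_2)\in\mathbb C(s)^2$ be a nonzero pair satisfying either $\widetilde\gamma_1h_1+\widetilde\gamma_2h_2+\omega=0$ with $h_1^{\iota_1}=h_1$, $h_2^{\iota_2}=h_2$, or $\widetilde\gamma_1h_1+\widetilde\gamma_2h_2=0$ with $h_1^{\iota_1}=-h_1$, $h_2^{\iota_2}=-h_2$. Then $\dfrac{h_2^{\sigma}(s)}{h_2(s)}=\dfrac{\widetilde\gamma^{\iota_1}(s)}{\widetilde\gamma(s)}$.
   Context: For a genus-zero weighted quadrant walk model (step set one of the five genus-zero sets, step weights $d_{i,j}$, Boltzmann weights $a,b>0$), set $A=1-1/a$, $B=1-1/b$, $\omega=1-A-B$. $s\mapsto(x(s),y(s))$ is a fixed rational parametrization by $\mathbb P^1$ of the kernel curve $\{xy(1-t\sum_{(i,j)}d_{i,j}x^iy^j)=0\}$ (for a fixed real $t$ transcendental over $\mathbb Q((d_{i,j}),a,b)$), with $x(1/s)=x(s)$ and $y(q/s)=y(s)$ for a fixed real $q$ not a root of unity. $\iota_1(s)=1/s$, $\iota_2(s)=q/s$, $\sigma(s)=qs=\iota_2(\iota_1(s))$, and $h^\tau=h\circ\tau$. $\widetilde\gamma_1=A/x(s)-td_{1,-1}/y(s)$, $\widetilde\gamma_2=B/y(s)-td_{-1,1}/x(s)$, $\widetilde\gamma=\widetilde\gamma_1/\widetilde\gamma_2$. *)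

theory Defs
  imports Complex_Main "HOL-Computational_Algebra.Polynomial"
begin

text \<open>Elements of \<open>\<complex>(s)\<close> are represented by complex functions that agree with a
  quotient of polynomials away from the zeros of the denominator; the values at the
  finitely many poles are irrelevant, and all identities between rational functions
  are stated for cofinitely many \<open>s\<close> (filter \<open>cofinite\<close>).\<close>

definition rat_fun :: "(complex \<Rightarrow> complex) \<Rightarrow> bool" where
  "rat_fun f \<longleftrightarrow> (\<exists>p r. r \<noteq> 0 \<and> (\<forall>z. poly r z \<noteq> 0 \<longrightarrow> f z = poly p z / poly r z))"

inductive_set gen_field :: "real set \<Rightarrow> real set" for S :: "real set" where
  rat: "r \<in> \<rat> \<Longrightarrow> r \<in> gen_field S"
| gen: "r \<in> S \<Longrightarrow> r \<in> gen_field S"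
| add: "u \<in> gen_field S \<Longrightarrow> v \<in> gen_field S \<Longrightarrow> u + v \<in> gen_field S"
| mult: "u \<in> gen_field S \<Longrightarrow> v \<in> gen_field S \<Longrightarrow> u * v \<in> gen_field S"
| uminus: "u \<in> gen_field S \<Longrightarrow> - u \<in> gen_field S"
| inverse: "u \<in> gen_field S \<Longrightarrow> inverse u \<in> gen_field S"

definition transcendental_over :: "real set \<Rightarrow> real \<Rightarrow> bool" where
  "transcendental_over K t \<longleftrightarrow>
     (\<forall>P :: real poly. P \<noteq> 0 \<longrightarrow> (\<forall>i. coeff P i \<in> K) \<longrightarrow> poly P t \<noteq> 0)"

text \<open>Genus-zero step sets: the support of the weights contains the two anti-diagonal
  steps, is contained in \<open>{(-1,1),(0,1),(1,1),(1,0),(1,-1)}\<close>, and is not reduced to the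
  two anti-diagonal steps (the five genus-zero sets, together with their images under
  the symmetry \<open>x \<leftrightarrow> y\<close>).\<close>

definition genus_zero_weights :: "(int \<Rightarrow> int \<Rightarrow> real) \<Rightarrow> bool" where
  "genus_zero_weights d \<longleftrightarrow>
     (\<forall>i j. d i j \<ge> 0) \<and>
     {(-1,1),(1,-1)} \<subseteq> {(i,j). d i j \<noteq> 0} \<and>
     {(i,j). d i j \<noteq> 0} \<subseteq> {(-1,1),(0,1),(1,1),(1,0),(1,-1)} \<and>
     {(i,j). d i j \<noteq> 0} \<noteq> {(-1,1),(1,-1)}"

text \<open>The kernel polynomial \<open>xy(1 - t \<Sum> d\<^sub>i\<^sub>,\<^sub>j x\<^sup>i y\<^sup>j)\<close>.\<close>

definition kernel :: "(int \<Rightarrow> int \<Rightarrow> real) \<Rightarrow> real \<Rightarrow> complex \<Rightarrow> complex \<Rightarrow> complex" where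
  "kernel d t X Y = X * Y - of_real t *
     (\<Sum>i\<in>{-1..1::int}. \<Sum>j\<in>{-1..1::int}.
        of_real (d i j) * X ^ nat (i + 1) * Y ^ nat (j + 1))"

definition kernel_param ::
  "(int \<Rightarrow> int \<Rightarrow> real) \<Rightarrow> real \<Rightarrow> (complex \<Rightarrow> complex) \<Rightarrow> (complex \<Rightarrow> complex) \<Rightarrow> bool" where
  "kernel_param d t x y \<longleftrightarrow> rat_fun x \<and> rat_fun y \<and>
     (\<exists>F. finite F \<and>
        inj_on (\<lambda>s. (x s, y s)) (- F) \<and>
        (\<forall>s\<in>- F. kernel d t (x s) (y s) = 0) \<and>
        finite ({(X, Y). kernel d t X Y = 0} - (\<lambda>s. (x s, y s)) ` (- F)))"

end

theory Submission imports Defs begin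

lemma rat_fun_dichotomy:
  assumes "rat_fun f" shows "finite {s. f s = 0} \<or> finite {s. f s \<noteq> 0}"
proof -
  obtain p r where r: "r \<noteq> 0" and fr: "\<And>z. poly r z \<noteq> 0 \<Longrightarrow> f z = poly p z / poly r z"
    using assms unfolding rat_fun_def by blast
  have fr_fin: "finite {z. poly r z = 0}" using r by (rule poly_roots_finite)
  show ?thesis
  proof (cases "p = 0")
    case True
    have "{s. f s \<noteq> 0} \<subseteq> {z. poly r z = 0}" using fr True by force
    then show ?thesis using fr_fin finite_subset by blast
  next
    case False
    have "{s. f s = 0} \<subseteq> {z. poly r z = 0} \<union> {z. poly p z = 0}" using fr by force
    then show ?thesis using fr_fin poly_roots_finite[OF False] finite_subset by blast
  qed
qed

lemma rat_fun_diff: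
  assumes "rat_fun f" "rat_fun g" shows "rat_fun (\<lambda>s. f s - g s)"
proof -
  obtain p1 r1 where r1: "r1 \<noteq> 0" and f1: "\<And>z. poly r1 z \<noteq> 0 \<Longrightarrow> f z = poly p1 z / poly r1 z"
    using assms(1) unfolding rat_fun_def by blast
  obtain p2 r2 where r2: "r2 \<noteq> 0" and f2: "\<And>z. poly r2 z \<noteq> 0 \<Longrightarrow> g z = poly p2 z / poly r2 z"
    using assms(2) unfolding rat_fun_def by blast
  show ?thesis unfolding rat_fun_def
  proof (rule exI[of _ "p1 * r2 - p2 * r1"], rule exI[of _ "r1 * r2"], intro conjI allI impI)
    show "r1 * r2 \<noteq> 0" using r1 r2 by simp
    fix z assume "poly (r1 * r2) z \<noteq> 0"
    then have a: "poly r1 z \<noteq> 0" "poly r2 z \<noteq> 0" by auto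
    have "f z - g z = poly p1 z / poly r1 z - poly p2 z / poly r2 z" using f1 f2 a by simp
    then show "f z - g z = poly (p1 * r2 - p2 * r1) z / poly (r1 * r2) z"
      using a by (simp add: field_simps)
  qed
qed

lemma rat_fun_cdiv:
  assumes "rat_fun f" shows "rat_fun (\<lambda>s. c / f s)"
proof -
  obtain p r where r: "r \<noteq> 0" and fr: "\<And>z. poly r z \<noteq> 0 \<Longrightarrow> f z = poly p z / poly r z"
    using assms unfolding rat_fun_def by blast
  show ?thesis
  proof (cases "p = 0")
    case True
    show ?thesis unfolding rat_fun_def
      apply (rule exI[of _ 0], rule exI[of _ r]) using r fr True by auto
  next
    case False
    show ?thesis unfolding rat_fun_def
    proof (rule exI[of _ "smult c (r * r)"], rule exI[of _ "r * p"], intro conjI allI impI)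
      show "r * p \<noteq> 0" using r False by simp
      fix z assume "poly (r * p) z \<noteq> 0"
      then have a: "poly r z \<noteq> 0" "poly p z \<noteq> 0" by auto
      have "c / f z = c / (poly p z / poly r z)" using fr a by simp
      then show "c / f z = poly (smult c (r * r)) z / poly (r * p) z"
        using a by (simp add: field_simps)
    qed
  qed
qed

lemma ev_inv:
  assumes "eventually P (cofinite :: complex filter)"
  shows "eventually (\<lambda>s. P (1 / s)) cofinite"
proof -
  have "{s. \<not> P (1 / s)} = inverse -` {u. \<not> P u}" by (auto simp: inverse_eq_divide)
  moreover have "inj (inverse :: complex \<Rightarrow> complex)" by (metis injI inverse_inverse_eq)
  ultimately show ?thesis using assms unfolding eventually_cofinite
    by (metis finite_vimageI)
qed

lemma quad_root:
  fixes a b c :: complex assumes "a \<noteq> 0" shows "\<exists>y. a * y^2 + b * y + c = 0"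
proof -
  define D where "D = csqrt (b^2 - 4*a*c)"
  have D2: "D^2 = b^2 - 4*a*c" unfolding D_def by simp
  define y where "y = (- b + D) / (2 * a)"
  have "a * y^2 + b * y + c = (D^2 - b^2 + 4*a*c) / (4 * a)"
    unfolding y_def using assms by (simp add: field_simps power2_eq_square)
  also have "\<dots> = 0" using D2 by simp
  finally show ?thesis by blast
qed

lemma coeff3_in:
  assumes "c0 \<in> K" "c1 \<in> K" "c2 \<in> K" "0 \<in> K"
  shows "\<forall>i. coeff [:c0, c1, c2:] i \<in> K"
proof
  fix i show "coeff [:c0, c1, c2:] i \<in> K"
    using assms by (cases i; cases "i - 1"; cases "i - 2"; auto simp: coeff_pCons split: nat.splits)
qed

lemma curve_inf:
  fixes t \<alpha> \<beta> \<gamma> \<delta> e A :: complex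
  assumes t: "t \<noteq> 0" and al: "\<alpha> \<noteq> 0" and e: "e \<noteq> 0" and cnd: "t^2*\<alpha>*e \<noteq> A - A^2"
  shows "infinite {(X,Y). X \<noteq> 0 \<and> Y \<noteq> 0 \<and> A*Y \<noteq> t*e*X \<and>
     X*Y - t*(\<alpha>*Y^2 + \<beta>*X*Y^2 + \<gamma>*X^2*Y^2 + \<delta>*X^2*Y + e*X^2) = 0}" (is "infinite ?S")
proof
  assume fin: "finite ?S"
  define Lp where "Lp = [:\<alpha>, \<beta>, \<gamma>:]"
  have Lp0: "Lp \<noteq> 0" unfolding Lp_def using al by simp
  define k0 where "k0 = t*e/A - t^3*\<alpha>*e^2/A^2 - t*e"
  define k1 where "k1 = -(t^3*\<beta>*e^2/A^2) - t^2*\<delta>*e/A"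
  define k2 where "k2 = -(t^3*\<gamma>*e^2/A^2)"
  define qp where "qp = [:k0, k1, k2:]"
  have k0: "A \<noteq> 0 \<Longrightarrow> k0 \<noteq> 0"
  proof
    assume A: "A \<noteq> 0" and "k0 = 0"
    then have "t*e*(A - t^2*\<alpha>*e - A^2) = 0" unfolding k0_def
      by (simp add: field_simps power2_eq_square power3_eq_cube)
    then have "A - t^2*\<alpha>*e - A^2 = 0" using t e by (metis mult_eq_0_iff)
    then have "t^2*\<alpha>*e = A - A^2" by algebra
    then show False using cnd by blast
  qed
  have qp0: "A \<noteq> 0 \<Longrightarrow> qp \<noteq> 0" unfolding qp_def using k0 by simp
  have qpK: "A \<noteq> 0 \<Longrightarrow> X*(t*e*X/A) - t*(\<alpha>*(t*e*X/A)^2 + \<beta>*X*(t*e*X/A)^2 + \<gamma>*X^2*(t*e*X/A)^2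
      + \<delta>*X^2*(t*e*X/A) + e*X^2) = X^2 * poly qp X" for X
    unfolding qp_def k0_def k1_def k2_def
    by (simp add: field_simps power2_eq_square power3_eq_cube)
  define G where "G = {X. X \<noteq> 0 \<and> poly Lp X \<noteq> 0 \<and> (A \<noteq> 0 \<longrightarrow> poly qp X \<noteq> 0)}"
  have "- G \<subseteq> {0} \<union> {X. poly Lp X = 0} \<union> (if A \<noteq> 0 then {X. poly qp X = 0} else {})"
    unfolding G_def by auto
  moreover have "finite ({0} \<union> {X. poly Lp X = 0} \<union> (if A \<noteq> 0 then {X. poly qp X = 0} else {}))"
    using poly_roots_finite[OF Lp0] poly_roots_finite[OF qp0] by auto
  ultimately have "finite (- G)" using finite_subset by blast
  then have Ginf: "infinite G"
    by (metis Compl_eq_Diff_UNIV Diff_infinite_finite double_compl infinite_UNIV_char_0)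
  have "\<forall>X\<in>G. \<exists>Y. (X, Y) \<in> ?S"
  proof
    fix X assume XG: "X \<in> G"
    then have X0: "X \<noteq> 0" and L: "poly Lp X \<noteq> 0" and Q: "A \<noteq> 0 \<Longrightarrow> poly qp X \<noteq> 0"
      unfolding G_def by auto
    have "- t * poly Lp X \<noteq> 0" using t L by simp
    then obtain Y where Y: "(- t * poly Lp X) * Y^2 + (X - t*\<delta>*X^2) * Y + (- t*e*X^2) = 0"
      using quad_root by blast
    have K: "X*Y - t*(\<alpha>*Y^2 + \<beta>*X*Y^2 + \<gamma>*X^2*Y^2 + \<delta>*X^2*Y + e*X^2) = 0"
      using Y unfolding Lp_def by (simp add: algebra_simps power2_eq_square)
    have Y0: "Y \<noteq> 0" using Y t e X0 by auto
    have AY: "A*Y \<noteq> t*e*X"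
    proof
      assume h: "A*Y = t*e*X"
      then have A0: "A \<noteq> 0" using t e X0 by auto
      then have "Y = t*e*X/A" using h by (simp add: field_simps)
      then have "X^2 * poly qp X = 0" using K qpK[OF A0, of X] by simp
      then show False using X0 Q[OF A0] by simp
    qed
    show "\<exists>Y. (X, Y) \<in> ?S" using X0 Y0 AY K by (intro exI[of _ Y]) simp
  qed
  from bchoice[OF this] obtain f where f: "\<forall>X\<in>G. (X, f X) \<in> ?S" by blast
  have "(\<lambda>X. (X, f X)) ` G \<subseteq> ?S" using f by auto
  moreover have "inj_on (\<lambda>X. (X, f X)) G" by (auto simp: inj_on_def)
  moreover have "infinite ((\<lambda>X. (X, f X)) ` G)"
    using Ginf calculation(2) by (simp add: finite_image_iff)
  ultimately have "infinite ?S" using finite_subset by blast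
  then show False using fin by blast
qed

lemma kernel_expand:
  assumes dz: "\<And>i j. (i,j) \<notin> {(-1,1),(0,1),(1,1),(1,0),(1,-1)} \<Longrightarrow> d i j = 0"
  shows "kernel d t X Y = X*Y - of_real t * (of_real (d (-1) 1) * Y^2 + of_real (d 0 1)*X*Y^2
     + of_real (d 1 1)*X^2*Y^2 + of_real (d 1 0)*X^2*Y + of_real (d 1 (-1))*X^2)"
proof -
  have I: "{-1..1::int} = {-1,0,1}" by auto
  have z: "d (-1) (-1) = 0" "d (-1) 0 = 0" "d 0 (-1) = 0" "d 0 0 = 0" using dz by auto
  show ?thesis unfolding kernel_def I using z by (simp add: algebra_simps power2_eq_square)
qed

lemma nonzero_from_curve:
  assumes param: "kernel_param d t x y" and Sinf: "infinite S"
    and Sc: "S \<subseteq> {(X,Y). kernel d t X Y = 0}"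
    and gS: "\<And>s. (x s, y s) \<in> S \<Longrightarrow> g s \<noteq> 0" and gr: "rat_fun g"
  shows "finite {s. g s = 0}"
proof -
  obtain F where F: "finite F" and cov: "finite ({(X, Y). kernel d t X Y = 0} - (\<lambda>s. (x s, y s)) ` (- F))"
    using param unfolding kernel_param_def by blast
  have sub: "S - ({(X, Y). kernel d t X Y = 0} - (\<lambda>s. (x s, y s)) ` (- F)) \<subseteq> (\<lambda>s. (x s, y s)) ` {s. g s \<noteq> 0}"
  proof
    fix p assume p: "p \<in> S - ({(X, Y). kernel d t X Y = 0} - (\<lambda>s. (x s, y s)) ` (- F))"
    then have "p \<in> (\<lambda>s. (x s, y s)) ` (- F)" using Sc by blast
    then obtain s where s: "p = (x s, y s)" by blast
    then have "g s \<noteq> 0" using gS p by blast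
    then show "p \<in> (\<lambda>s. (x s, y s)) ` {s. g s \<noteq> 0}" using s by blast
  qed
  have inf: "infinite (S - ({(X, Y). kernel d t X Y = 0} - (\<lambda>s. (x s, y s)) ` (- F)))"
    using Diff_infinite_finite[OF cov Sinf] .
  have "infinite {s. g s \<noteq> 0}"
  proof
    assume "finite {s. g s \<noteq> 0}"
    then have "finite ((\<lambda>s. (x s, y s)) ` {s. g s \<noteq> 0})" by (rule finite_imageI)
    then have "finite (S - ({(X, Y). kernel d t X Y = 0} - (\<lambda>s. (x s, y s)) ` (- F)))"
      by (rule finite_subset[OF sub])
    then show False using inf by (rule notE[rotated])
  qed
  then show ?thesis using rat_fun_dichotomy[OF gr] by blast
qed

lemma pointwise:
  fixes G1 G2 H1 H2 G1' G2' H1' H2' Hq \<epsilon> :: complex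
  assumes e1: "G1*H1 + G2*H2 = 0" and e2: "G1'*H1' + G2'*H2' = 0"
    and i1: "H1' = \<epsilon>*H1" and i2: "Hq = \<epsilon>*H2'" and ep: "\<epsilon>*\<epsilon> = 1"
    and n1: "G1 \<noteq> 0" and n2: "G2' \<noteq> 0" and n3: "H2 \<noteq> 0"
  shows "Hq / H2 = (G1'/G2') / (G1/G2)"
proof -
  have a: "H1 = - G2*H2/G1" using e1 n1 by (simp add: field_simps add_eq_0_iff)
  have b: "H2' = - G1'*H1'/G2'" using e2 n2 by (simp add: field_simps add_eq_0_iff)
  have "Hq = (\<epsilon>*\<epsilon>) * (G1'*G2*H2) / (G2'*G1)" using i2 b i1 a n1 n2 by (simp add: field_simps)
  then have "Hq = G1'*G2*H2 / (G2'*G1)" using ep by simp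
  then show ?thesis using n1 n2 n3 by (simp add: field_simps)
qed

theorem lemma2p6:
  fixes d :: "int \<Rightarrow> int \<Rightarrow> real"
    and a b t q :: real
    and x y h1 h2 :: "complex \<Rightarrow> complex"
  assumes weights: "genus_zero_weights d"
    and ab: "a > 0" "b > 0"
    and t_transc: "transcendental_over (gen_field ({d i j | i j. True} \<union> {a, b})) t"
    and q_not_root_of_unity: "\<forall>n::nat. n > 0 \<longrightarrow> q ^ n \<noteq> 1"
    and param: "kernel_param d t x y"
    and x_inv: "\<forall>\<^sub>F s in cofinite. x (1 / s) = x s"
    and y_inv: "\<forall>\<^sub>F s in cofinite. y (of_real q / s) = y s"
    and omega0: "1 - (1 - 1 / a) - (1 - 1 / b) = 0"
    and h_rat: "rat_fun h1" "rat_fun h2"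
    and h_nonzero: "\<not> ((\<forall>\<^sub>F s in cofinite. h1 s = 0) \<and> (\<forall>\<^sub>F s in cofinite. h2 s = 0))"
    and h_eq:
      "(let A = 1 - 1 / a; B = 1 - 1 / b; \<omega> = 1 - A - B;
            g1 = (\<lambda>s. of_real A / x s - of_real (t * d 1 (-1)) / y s);
            g2 = (\<lambda>s. of_real B / y s - of_real (t * d (-1) 1) / x s)
        in ((\<forall>\<^sub>F s in cofinite. g1 s * h1 s + g2 s * h2 s + of_real \<omega> = 0) \<and>
            (\<forall>\<^sub>F s in cofinite. h1 (1 / s) = h1 s) \<and>
            (\<forall>\<^sub>F s in cofinite. h2 (of_real q / s) = h2 s))
         \<or> ((\<forall>\<^sub>F s in cofinite. g1 s * h1 s + g2 s * h2 s = 0) \<and>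
            (\<forall>\<^sub>F s in cofinite. h1 (1 / s) = - h1 s) \<and>
            (\<forall>\<^sub>F s in cofinite. h2 (of_real q / s) = - h2 s)))"
  shows "let A = 1 - 1 / a; B = 1 - 1 / b;
             g1 = (\<lambda>s. of_real A / x s - of_real (t * d 1 (-1)) / y s);
             g2 = (\<lambda>s. of_real B / y s - of_real (t * d (-1) 1) / x s);
             g = (\<lambda>s. g1 s / g2 s)
         in \<forall>\<^sub>F s in cofinite. h2 (of_real q * s) / h2 s = g (1 / s) / g s"
proof -
  define A where "A = 1 - 1 / a"
  define B where "B = 1 - 1 / b"
  define g1 where "g1 = (\<lambda>s. complex_of_real A / x s - complex_of_real (t * d 1 (-1)) / y s)"
  define g2 where "g2 = (\<lambda>s. complex_of_real B / y s - complex_of_real (t * d (-1) 1) / x s)"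
  have BA: "B = 1 - A" using omega0 unfolding A_def B_def by simp
  have dnn: "\<And>i j. d i j \<ge> 0" and dsup: "{(i,j). d i j \<noteq> 0} \<subseteq> {(-1,1),(0,1),(1,1),(1,0),(1,-1)}"
    and dsub: "{(-1,1),(1,-1)} \<subseteq> {(i,j). d i j \<noteq> 0}"
    using weights unfolding genus_zero_weights_def by auto
  have dz: "\<And>i j. (i,j) \<notin> {(-1,1),(0,1),(1,1),(1,0),(1,-1)} \<Longrightarrow> d i j = 0" using dsup by blast
  have al0: "d (-1) 1 \<noteq> 0" and e0: "d 1 (-1) \<noteq> 0" using dsub by auto
  define K where "K = gen_field ({d i j | i j. True} \<union> {a, b})"
  have dK: "d i j \<in> K" for i j unfolding K_def by (rule gen_field.gen) blast
  have aK: "a \<in> K" unfolding K_def by (rule gen_field.gen) blast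
  have ratK: "r \<in> \<rat> \<Longrightarrow> r \<in> K" for r unfolding K_def by (rule gen_field.rat)
  have diffK: "u \<in> K \<Longrightarrow> v \<in> K \<Longrightarrow> u - v \<in> K" for u v
    unfolding K_def diff_conv_add_uminus by (intro gen_field.add gen_field.uminus)
  have multK: "u \<in> K \<Longrightarrow> v \<in> K \<Longrightarrow> u * v \<in> K" for u v
    unfolding K_def by (rule gen_field.mult)
  have AK: "A \<in> K" unfolding A_def divide_inverse mult_1_left
    using diffK ratK aK K_def gen_field.inverse by (metis Rats_1)
  have tr: "\<And>P. P \<noteq> 0 \<Longrightarrow> (\<forall>i. coeff P i \<in> K) \<Longrightarrow> poly P t \<noteq> 0"
    using t_transc unfolding transcendental_over_def K_def by blast
  have t0: "t \<noteq> 0"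
  proof -
    have c: "\<forall>i. coeff [:0, 1, 0:] i \<in> K" by (rule coeff3_in) (auto intro: ratK)
    have "poly [:0, 1, 0:] t \<noteq> 0" by (rule tr[OF _ c]) simp
    then show ?thesis by simp
  qed
  have cnd: "t^2 * d (-1) 1 * d 1 (-1) \<noteq> A - A^2"
  proof -
    have "poly [:A - A^2, 0, - (d (-1) 1 * d 1 (-1)):] t \<noteq> 0"
    proof (rule tr)
      show "[:A - A^2, 0, - (d (-1) 1 * d 1 (-1)):] \<noteq> 0" using al0 e0 by simp
      have "A - A^2 \<in> K" unfolding power2_eq_square using AK diffK multK by blast
      moreover have "- (d (-1) 1 * d 1 (-1)) \<in> K"
        using multK dK diffK ratK[OF Rats_0] by (metis diff_0)
      ultimately show "\<forall>i. coeff [:A - A^2, 0, - (d (-1) 1 * d 1 (-1)):] i \<in> K"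
        by (intro coeff3_in ratK[OF Rats_0]) auto
    qed
    then show ?thesis by (simp add: algebra_simps power2_eq_square)
  qed
  have cndB: "t^2 * d 1 (-1) * d (-1) 1 \<noteq> B - B^2"
    using cnd unfolding BA by (simp add: algebra_simps power2_eq_square)
  have ratx: "rat_fun x" and raty: "rat_fun y" using param unfolding kernel_param_def by auto
  have g1fin: "finite {s. g1 s = 0}"
  proof -
    let ?S = "{(X,Y). X \<noteq> 0 \<and> Y \<noteq> 0 \<and> of_real A*Y \<noteq> of_real t*of_real (d 1 (-1))*X \<and>
     X*Y - of_real t*(of_real (d (-1) 1)*Y^2 + of_real (d 0 1)*X*Y^2 + of_real (d 1 1)*X^2*Y^2
       + of_real (d 1 0)*X^2*Y + of_real (d 1 (-1))*X^2) = (0::complex)}"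
    have c: "(complex_of_real t)^2 * of_real (d (-1) 1) * of_real (d 1 (-1)) \<noteq> of_real A - (of_real A)^2"
    proof
      assume "(complex_of_real t)^2 * of_real (d (-1) 1) * of_real (d 1 (-1)) = of_real A - (of_real A)^2"
      then have "complex_of_real (t^2 * d (-1) 1 * d 1 (-1)) = complex_of_real (A - A^2)" by simp
      then show False using cnd by (simp only: of_real_eq_iff)
    qed
    have inf: "infinite ?S"
      by (rule curve_inf) (use t0 al0 e0 c in auto)
    show ?thesis
    proof (rule nonzero_from_curve[OF param inf])
      show "?S \<subseteq> {(X,Y). kernel d t X Y = 0}" using kernel_expand[OF dz] by auto
      show "rat_fun g1" unfolding g1_def by (intro rat_fun_diff rat_fun_cdiv ratx raty)
      fix s assume h: "(x s, y s) \<in> ?S"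
      show "g1 s \<noteq> 0"
      proof
        assume "g1 s = 0"
        then have "of_real A * y s = of_real t * of_real (d 1 (-1)) * x s"
          using h unfolding g1_def by (simp add: field_simps)
        then show False using h by simp
      qed
    qed
  qed
  have g2fin: "finite {s. g2 s = 0}"
  proof -
    let ?T = "{(X,Y). X \<noteq> 0 \<and> Y \<noteq> 0 \<and> of_real B*Y \<noteq> of_real t*of_real (d (-1) 1)*X \<and>
     X*Y - of_real t*(of_real (d 1 (-1))*Y^2 + of_real (d 1 0)*X*Y^2 + of_real (d 1 1)*X^2*Y^2
       + of_real (d 0 1)*X^2*Y + of_real (d (-1) 1)*X^2) = (0::complex)}"
    have c: "(complex_of_real t)^2 * of_real (d 1 (-1)) * of_real (d (-1) 1) \<noteq> of_real B - (of_real B)^2"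
    proof
      assume "(complex_of_real t)^2 * of_real (d 1 (-1)) * of_real (d (-1) 1) = of_real B - (of_real B)^2"
      then have "complex_of_real (t^2 * d 1 (-1) * d (-1) 1) = complex_of_real (B - B^2)" by simp
      then show False using cndB by (simp only: of_real_eq_iff)
    qed
    have inf0: "infinite ?T"
      by (rule curve_inf) (use t0 al0 e0 c in auto)
    have inf: "infinite (prod.swap ` ?T)"
      using inf0 by (simp add: finite_image_iff)
    show ?thesis
    proof (rule nonzero_from_curve[OF param inf])
      show "prod.swap ` ?T \<subseteq> {(X,Y). kernel d t X Y = 0}"
      proof
        fix p assume "p \<in> prod.swap ` ?T"
        then obtain X Y where p: "p = (X, Y)" and T: "(Y, X) \<in> ?T" by auto
        have "kernel d t X Y = Y*X - of_real t*(of_real (d 1 (-1))*X^2 + of_real (d 1 0)*Y*X^2 + of_real (d 1 1)*Y^2*X^2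
       + of_real (d 0 1)*Y^2*X + of_real (d (-1) 1)*Y^2)"
          using kernel_expand[where d=d and t=t and X=X and Y=Y, OF dz] by (simp add: algebra_simps)
        then show "p \<in> {(X,Y). kernel d t X Y = 0}" using T p by simp
      qed
      show "rat_fun g2" unfolding g2_def by (intro rat_fun_diff rat_fun_cdiv ratx raty)
      fix s assume h: "(x s, y s) \<in> prod.swap ` ?T"
      then have h': "(y s, x s) \<in> ?T" by auto
      show "g2 s \<noteq> 0"
      proof
        assume "g2 s = 0"
        then have "of_real B * x s = of_real t * of_real (d (-1) 1) * y s"
          using h' unfolding g2_def by (simp add: field_simps)
        then show False using h' by simp
      qed
    qed
  qed
  obtain \<epsilon> :: complex where ep: "\<epsilon> * \<epsilon> = 1"
    and E: "\<forall>\<^sub>F s in cofinite. g1 s * h1 s + g2 s * h2 s = 0"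
    and I1: "\<forall>\<^sub>F s in cofinite. h1 (1 / s) = \<epsilon> * h1 s"
    and I2: "\<forall>\<^sub>F s in cofinite. h2 (of_real q / s) = \<epsilon> * h2 s"
  proof -
    have om: "complex_of_real (1 - A - B) = 0" using omega0 unfolding A_def B_def by simp
    from h_eq consider
      "(\<forall>\<^sub>F s in cofinite. g1 s * h1 s + g2 s * h2 s + of_real (1 - A - B) = 0) \<and>
            (\<forall>\<^sub>F s in cofinite. h1 (1 / s) = h1 s) \<and>
            (\<forall>\<^sub>F s in cofinite. h2 (of_real q / s) = h2 s)"
      | "(\<forall>\<^sub>F s in cofinite. g1 s * h1 s + g2 s * h2 s = 0) \<and>
            (\<forall>\<^sub>F s in cofinite. h1 (1 / s) = - h1 s) \<and>
            (\<forall>\<^sub>F s in cofinite. h2 (of_real q / s) = - h2 s)"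
      unfolding Let_def A_def B_def g1_def g2_def by blast
    then show ?thesis
    proof cases
      case 1
      then show ?thesis using that[of 1] om by simp
    next
      case 2
      then show ?thesis using that[of "-1"] by simp
    qed
  qed
  have G1: "\<forall>\<^sub>F s in cofinite. g1 s \<noteq> 0" using g1fin unfolding eventually_cofinite by simp
  have G2: "\<forall>\<^sub>F s in cofinite. g2 s \<noteq> 0" using g2fin unfolding eventually_cofinite by simp
  have H2: "\<forall>\<^sub>F s in cofinite. h2 s \<noteq> 0"
  proof -
    have "finite {s. h2 s = 0}"
    proof (rule ccontr)
      assume "infinite {s. h2 s = 0}"
      then have f: "finite {s. h2 s \<noteq> 0}" using rat_fun_dichotomy[OF h_rat(2)] by blast
      have Z2: "\<forall>\<^sub>F s in cofinite. h2 s = 0" using f unfolding eventually_cofinite by simp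
      have "\<forall>\<^sub>F s in cofinite. h1 s = 0"
        using E G1 Z2 by eventually_elim simp
      then show False using h_nonzero Z2 by blast
    qed
    then show ?thesis unfolding eventually_cofinite by simp
  qed
  have E': "\<forall>\<^sub>F s in cofinite. g1 (1/s) * h1 (1/s) + g2 (1/s) * h2 (1/s) = 0" by (rule ev_inv[OF E])
  have I2': "\<forall>\<^sub>F s in cofinite. h2 (of_real q / (1/s)) = \<epsilon> * h2 (1/s)" by (rule ev_inv[OF I2])
  have G2': "\<forall>\<^sub>F s in cofinite. g2 (1/s) \<noteq> 0" by (rule ev_inv[OF G2])
  have "\<forall>\<^sub>F s in cofinite. h2 (of_real q * s) / h2 s = (g1 (1/s) / g2 (1/s)) / (g1 s / g2 s)"
    using E E' I1 I2' G1 G2' H2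
  proof eventually_elim
    case (elim s)
    have q: "h2 (of_real q * s) = \<epsilon> * h2 (1/s)" using elim(4) by simp
    show ?case by (rule pointwise[OF elim(1) elim(2) elim(3) q ep elim(5) elim(6) elim(7)])
  qed
  then show ?thesis unfolding Let_def g1_def g2_def A_def B_def .
qed

end
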